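(* Let $G$ be a finitely generated group. Then every sequence of almost-invariant probability measures on $G$ measures index uniformly.
   Context: A sequence $(\mu_n)$ of probability measures on $G$ is almost-invariant if $\|x\cdot\mu_n-\mu_n\|_1\to0$ for every $x\in G$, where $x\cdot\mu(A)=\mu(x^{-1}A)$. It measures index uniformly if $\mu_n(xH)\to1/[G:H]$ uniformly over all $x\in G$ and all subgroups $H$ of $G$, with the convention $1/[G:H]=0$ when $H$ has infinite index. *)

theory Defs
  imports "HOL-Algebra.Algebra" "HOL-Probability.Probability"
begin

definition fin_gen_group :: "('a, 'b) monoid_scheme \<Rightarrow> bool" where
  "fin_gen_group G \<longleftrightarrow> group G \<and>
     (\<exists>S. finite S \<and> S \<subseteq> carrier G \<and> generate G S = carrier G)"

text \<open>Probability measures on the (countable, discrete) group G: pmfs supported in carrier G.\<close>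
definition prob_on :: "('a, 'b) monoid_scheme \<Rightarrow> 'a pmf \<Rightarrow> bool" where
  "prob_on G \<mu> \<longleftrightarrow> set_pmf \<mu> \<subseteq> carrier G"

text \<open>The l1-distance between the translate x.mu (with (x.mu)(A) = mu(x^-1 A)) and mu.\<close>
definition transl_dist :: "('a, 'b) monoid_scheme \<Rightarrow> 'a \<Rightarrow> 'a pmf \<Rightarrow> real" where
  "transl_dist G x \<mu> =
     (\<Sum>\<^sub>\<infinity> g\<in>carrier G. \<bar>pmf \<mu> (inv\<^bsub>G\<^esub> x \<otimes>\<^bsub>G\<^esub> g) - pmf \<mu> g\<bar>)"

definition almost_invariant :: "('a, 'b) monoid_scheme \<Rightarrow> (nat \<Rightarrow> 'a pmf) \<Rightarrow> bool" where
  "almost_invariant G \<mu> \<longleftrightarrow>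
     (\<forall>x\<in>carrier G. (\<lambda>n. transl_dist G x (\<mu> n)) \<longlonglongrightarrow> 0)"

text \<open>1/[G:H], with the convention that it is 0 when H has infinite index.\<close>
definition inv_index :: "('a, 'b) monoid_scheme \<Rightarrow> 'a set \<Rightarrow> real" where
  "inv_index G H = (if finite (rcosets\<^bsub>G\<^esub> H) then 1 / real (card (rcosets\<^bsub>G\<^esub> H)) else 0)"

definition measures_index_uniformly :: "('a, 'b) monoid_scheme \<Rightarrow> (nat \<Rightarrow> 'a pmf) \<Rightarrow> bool" where
  "measures_index_uniformly G \<mu> \<longleftrightarrow>
     (\<forall>\<epsilon>>0. \<exists>N. \<forall>n\<ge>N. \<forall>x\<in>carrier G. \<forall>H. subgroup H G \<longrightarrow>
        \<bar>measure_pmf.prob (\<mu> n) (x <#\<^bsub>G\<^esub> H) - inv_index G H\<bar> < \<epsilon>)"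

end

theory Submission
  imports Defs
begin

lemma pmf_summable: "pmf p summable_on A"
proof -
  have "Infinite_Sum.abs_summable_on (pmf p) A"
    using abs_summable_equivalent pmf_abs_summable by blast
  then show ?thesis using summable_on_iff_abs_summable_on_real by blast
qed

lemma prob_infsum: "measure_pmf.prob p A = infsum (pmf p) A"
  by (simp add: measure_pmf_conv_infsetsum infsetsum_infsum pmf_abs_summable)

lemma (in group) transl_bound:
  assumes "y \<in> carrier G" "A \<subseteq> carrier G"
  shows "\<bar>measure_pmf.prob \<mu> (m_inv G y <# A) - measure_pmf.prob \<mu> A\<bar> \<le> transl_dist G y \<mu>"
proof -
  have inj: "inj_on (\<lambda>a. m_inv G y \<otimes> a) S" if "S \<subseteq> carrier G" for S
    using that assms by (intro inj_onI) (metis inv_closed l_cancel subsetD)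
  have img: "m_inv G y <# A = (\<lambda>a. m_inv G y \<otimes> a) ` A"
    unfolding l_coset_def by auto
  define f where "f a = pmf \<mu> (m_inv G y \<otimes> a) - pmf \<mu> a" for a
  have s1: "(\<lambda>a. pmf \<mu> (m_inv G y \<otimes> a)) summable_on S" if "S \<subseteq> carrier G" for S
  proof -
    have "pmf \<mu> summable_on ((\<lambda>a. m_inv G y \<otimes> a) ` S)" by (rule pmf_summable)
    then show ?thesis using summable_on_reindex[OF inj[OF that], of "pmf \<mu>"] by (simp add: comp_def)
  qed
  have s2: "(\<lambda>a. - pmf \<mu> a) summable_on S" for S
    using summable_on_uminus pmf_summable by blast
  have sf: "f summable_on S" if "S \<subseteq> carrier G" for S
    unfolding f_def using summable_on_add[OF s1[OF that] s2[of S]]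
    by simp
  have "measure_pmf.prob \<mu> (m_inv G y <# A) = infsum (\<lambda>a. pmf \<mu> (m_inv G y \<otimes> a)) A"
    unfolding prob_infsum img using infsum_reindex[OF inj[OF assms(2)]] by (simp add: comp_def)
  then have "measure_pmf.prob \<mu> (m_inv G y <# A) - measure_pmf.prob \<mu> A = infsum f A"
    unfolding f_def prob_infsum
    using infsum_add[OF s1[OF assms(2)] s2[of A]]
    by (simp add: infsum_uminus)
  also have "\<bar>infsum f A\<bar> \<le> infsum (\<lambda>a. \<bar>f a\<bar>) A"
    using norm_infsum_bound[of f A] sf[OF assms(2)] summable_on_iff_abs_summable_on_real by auto
  also have "\<dots> \<le> infsum (\<lambda>a. \<bar>f a\<bar>) (carrier G)"
  proof (rule infsum_mono2)
    show "(\<lambda>a. \<bar>f a\<bar>) summable_on A" "(\<lambda>a. \<bar>f a\<bar>) summable_on carrier G"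
      using sf[OF assms(2)] sf[of "carrier G"] summable_on_iff_abs_summable_on_real by auto
  qed (use assms in auto)
  also have "\<dots> = transl_dist G y \<mu>" unfolding transl_dist_def f_def by simp
  finally show ?thesis by simp
qed

lemma prob_carrier: "set_pmf p \<subseteq> A \<Longrightarrow> measure_pmf.prob p A = 1"
  using infsetsum_pmf_eq_1 measure_pmf_conv_infsetsum by metis

lemma (in group) inv_lcoset:
  assumes HG: "subgroup H G" and y: "y \<in> carrier G"
  shows "(\<lambda>a. m_inv G a) ` (y <# H) = H #> m_inv G y"
proof
  show "(\<lambda>a. m_inv G a) ` (y <# H) \<subseteq> H #> m_inv G y"
  proof
    fix z assume "z \<in> (\<lambda>a. m_inv G a) ` (y <# H)"
    then obtain a where a: "a \<in> y <# H" and za: "z = m_inv G a" by (rule imageE)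
    from a obtain h where h: "h \<in> H" and ha: "a = y \<otimes> h" unfolding l_coset_def by (elim UN_E singletonE)
    have z: "z = m_inv G (y \<otimes> h)" using za ha by simp
    have hc: "h \<in> carrier G" by (rule subgroup.mem_carrier[OF HG h])
    have "m_inv G (y \<otimes> h) = m_inv G h \<otimes> m_inv G y" by (rule inv_mult_group[OF y hc])
    moreover have "m_inv G h \<in> H" by (rule subgroup.m_inv_closed[OF HG h])
    ultimately show "z \<in> H #> m_inv G y" unfolding r_coset_def z by blast
  qed
  show "H #> m_inv G y \<subseteq> (\<lambda>a. m_inv G a) ` (y <# H)"
  proof
    fix z assume "z \<in> H #> m_inv G y"
    then obtain h where h: "h \<in> H" and z: "z = h \<otimes> m_inv G y" unfolding r_coset_def by (elim UN_E singletonE)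
    have hc: "m_inv G h \<in> carrier G" by (rule subgroup.mem_carrier[OF HG subgroup.m_inv_closed[OF HG h]])
    have "m_inv G (y \<otimes> m_inv G h) = m_inv G (m_inv G h) \<otimes> m_inv G y" by (rule inv_mult_group[OF y hc])
    also have "m_inv G (m_inv G h) = h" by (rule inv_inv[OF subgroup.mem_carrier[OF HG h]])
    finally have "z = m_inv G (y \<otimes> m_inv G h)" using z by simp
    moreover have "y \<otimes> m_inv G h \<in> y <# H"
      unfolding l_coset_def using subgroup.m_inv_closed[OF HG h] by blast
    ultimately show "z \<in> (\<lambda>a. m_inv G a) ` (y <# H)" by blast
  qed
qed

lemma (in group) lcosets_bij:
  assumes "subgroup H G"
  shows "bij_betw (\<lambda>c. (\<lambda>a. m_inv G a) ` c) {y <# H | y. y \<in> carrier G} (rcosets H)"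
proof (rule bij_betwI')
  fix c1 c2 assume "c1 \<in> {y <# H | y. y \<in> carrier G}" "c2 \<in> {y <# H | y. y \<in> carrier G}"
  then have sub: "c1 \<subseteq> carrier G" "c2 \<subseteq> carrier G"
    using l_coset_subset_G subgroup.subset[OF assms] by blast+
  have "(\<lambda>a. m_inv G a) ` ((\<lambda>a. m_inv G a) ` c) = c" if "c \<subseteq> carrier G" for c
    using that by (force simp: image_image)
  then show "((\<lambda>a. m_inv G a) ` c1 = (\<lambda>a. m_inv G a) ` c2) = (c1 = c2)" using sub by metis
next
  fix c assume "c \<in> {y <# H | y. y \<in> carrier G}"
  then show "(\<lambda>a. m_inv G a) ` c \<in> rcosets H"
    using inv_lcoset[OF assms] unfolding RCOSETS_def by auto
next
  fix d assume "d \<in> rcosets H"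
  then obtain z where z: "z \<in> carrier G" "d = H #> z" unfolding RCOSETS_def by auto
  then have "d = (\<lambda>a. m_inv G a) ` (m_inv G z <# H)" using inv_lcoset[OF assms, of "m_inv G z"] by simp
  then show "\<exists>c\<in>{y <# H | y. y \<in> carrier G}. d = (\<lambda>a. m_inv G a) ` c" using z by blast
qed

primrec wball :: "('a, 'b) monoid_scheme \<Rightarrow> 'a set \<Rightarrow> nat \<Rightarrow> 'a set" where
  "wball G T 0 = {\<one>\<^bsub>G\<^esub>}"
| "wball G T (Suc k) = wball G T k \<union> (\<lambda>(s, b). s \<otimes>\<^bsub>G\<^esub> b) ` (T \<times> wball G T k)"

lemma wball_finite: "finite T \<Longrightarrow> finite (wball G T k)"
  by (induction k) auto

lemma (in group) wball_carrier: "T \<subseteq> carrier G \<Longrightarrow> wball G T k \<subseteq> carrier G"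
  by (induction k) auto

lemma wball_mono: "k \<le> m \<Longrightarrow> wball G T k \<subseteq> wball G T m"
  by (induction m) (auto simp: le_Suc_eq)

lemma (in group) wball_one: "\<one> \<in> wball G T k"
  using wball_mono[of 0 k G T] by auto

lemma (in group) coset_closure:
  assumes HG: "subgroup H G" and x: "x \<in> carrier G" and S: "S \<subseteq> carrier G"
    and gen: "generate G S = carrier G"
    and T: "T = S \<union> m_inv G ` S"
    and eq: "(\<lambda>w. (w \<otimes> x) <# H) ` wball G T (Suc k) = (\<lambda>w. (w \<otimes> x) <# H) ` wball G T k"
  shows "(\<lambda>w. (w \<otimes> x) <# H) ` wball G T k = {y <# H | y. y \<in> carrier G}"
proof -
  have Tc: "T \<subseteq> carrier G" using S T by auto
  have Wc: "wball G T k \<subseteq> carrier G" by (rule wball_carrier[OF Tc])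
  have Hc: "H \<subseteq> carrier G" by (rule subgroup.subset[OF HG])
  have step: "\<exists>w'\<in>wball G T k. (t \<otimes> (w \<otimes> x)) <# H = (w' \<otimes> x) <# H"
    if t: "t \<in> T" and w: "w \<in> wball G T k" for t w
  proof -
    have "t \<otimes> w \<in> wball G T (Suc k)" using t w by force
    then have "((t \<otimes> w) \<otimes> x) <# H \<in> (\<lambda>w. (w \<otimes> x) <# H) ` wball G T k"
      using eq by (metis (no_types, lifting) image_eqI)
    moreover have "(t \<otimes> w) \<otimes> x = t \<otimes> (w \<otimes> x)"
      using t w Tc Wc x by (metis m_assoc subsetD)
    ultimately show ?thesis by auto
  qed
  have P: "\<forall>w\<in>wball G T k. \<exists>w'\<in>wball G T k. (g \<otimes> (w \<otimes> x)) <# H = (w' \<otimes> x) <# H"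
    if "g \<in> generate G S" for g
    using that
  proof (induction rule: generate.induct)
    case one
    show ?case
    proof
      fix w assume w: "w \<in> wball G T k"
      have "w \<otimes> x \<in> carrier G" using w Wc x by (metis m_closed subsetD)
      then have "\<one> \<otimes> (w \<otimes> x) = w \<otimes> x" by (rule l_one)
      then show "\<exists>w'\<in>wball G T k. (\<one> \<otimes> (w \<otimes> x)) <# H = (w' \<otimes> x) <# H" using w by auto
    qed
  next
    case (incl h)
    then have "h \<in> T" using T by auto
    then show ?case using step by blast
  next
    case (inv h)
    then have "m_inv G h \<in> T" using T by auto
    then show ?case using step by blast
  next
    case (eng h1 h2)
    have h1c: "h1 \<in> carrier G" using eng.hyps(1) gen by simp
    have h2c: "h2 \<in> carrier G" using eng.hyps(2) gen by simp
    show ?case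
    proof
      fix w assume w: "w \<in> wball G T k"
      have wx: "w \<otimes> x \<in> carrier G" using w Wc x by (metis m_closed subsetD)
      obtain w' where w': "w' \<in> wball G T k" "(h2 \<otimes> (w \<otimes> x)) <# H = (w' \<otimes> x) <# H"
        using eng.IH(2) w by blast
      have w'x: "w' \<otimes> x \<in> carrier G" using w' Wc x by (metis m_closed subsetD)
      obtain w'' where w'': "w'' \<in> wball G T k" "(h1 \<otimes> (w' \<otimes> x)) <# H = (w'' \<otimes> x) <# H"
        using eng.IH(1) w' by blast
      have "(h1 \<otimes> h2 \<otimes> (w \<otimes> x)) <# H = h1 <# ((h2 \<otimes> (w \<otimes> x)) <# H)"
        using lcos_m_assoc[OF Hc h1c m_closed[OF h2c wx]] m_assoc[OF h1c h2c wx] by simp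
      also have "\<dots> = h1 <# ((w' \<otimes> x) <# H)" using w' by simp
      also have "\<dots> = (h1 \<otimes> (w' \<otimes> x)) <# H" using lcos_m_assoc[OF Hc h1c w'x] .
      finally show "\<exists>w'\<in>wball G T k. (h1 \<otimes> h2 \<otimes> (w \<otimes> x)) <# H = (w' \<otimes> x) <# H"
        using w'' by auto
    qed
  qed
  show ?thesis
  proof
    show "(\<lambda>w. (w \<otimes> x) <# H) ` wball G T k \<subseteq> {y <# H | y. y \<in> carrier G}"
      using Wc x by (auto intro: m_closed)
    show "{y <# H | y. y \<in> carrier G} \<subseteq> (\<lambda>w. (w \<otimes> x) <# H) ` wball G T k"
    proof
      fix c assume "c \<in> {y <# H | y. y \<in> carrier G}"
      then obtain y where y: "y \<in> carrier G" "c = y <# H" by blast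
      have g: "y \<otimes> m_inv G x \<in> generate G S" using gen y x by simp
      obtain w' where w': "w' \<in> wball G T k" "((y \<otimes> m_inv G x) \<otimes> (\<one> \<otimes> x)) <# H = (w' \<otimes> x) <# H"
        using P[OF g] wball_one by blast
      have "(y \<otimes> m_inv G x) \<otimes> (\<one> \<otimes> x) = y" using y x by (simp add: m_assoc)
      then show "c \<in> (\<lambda>w. (w \<otimes> x) <# H) ` wball G T k" using w' y by auto
    qed
  qed
qed

lemma (in group) coset_growth:
  assumes HG: "subgroup H G" and x: "x \<in> carrier G" and S: "S \<subseteq> carrier G" "finite S"
    and gen: "generate G S = carrier G"
    and T: "T = S \<union> m_inv G ` S"
  shows "(\<lambda>w. (w \<otimes> x) <# H) ` wball G T k = {y <# H | y. y \<in> carrier G}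
    \<or> Suc k \<le> card ((\<lambda>w. (w \<otimes> x) <# H) ` wball G T k)"
proof (induction k)
  case 0
  show ?case by simp
next
  case (Suc k)
  define C where "C k = (\<lambda>w. (w \<otimes> x) <# H) ` wball G T k" for k
  define L where "L = {y <# H | y. y \<in> carrier G}"
  have Tc: "T \<subseteq> carrier G" using S T by auto
  have fT: "finite T" using S T by auto
  have CL: "C m \<subseteq> L" for m
    unfolding C_def L_def using wball_carrier[OF Tc, of m] x by (auto intro: m_closed)
  have fin: "finite (C m)" for m unfolding C_def by (intro finite_imageI wball_finite[OF fT])
  have mono: "C k \<subseteq> C (Suc k)" unfolding C_def using wball_mono[of k "Suc k" G T] by auto
  have IH: "C k = L \<or> Suc k \<le> card (C k)" using Suc.IH unfolding C_def L_def .
  have "C (Suc k) = L \<or> Suc (Suc k) \<le> card (C (Suc k))"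
  proof (cases "C k = L")
    case True
    then show ?thesis using mono CL[of "Suc k"] by auto
  next
    case False
    then have ck: "Suc k \<le> card (C k)" using IH by auto
    have "C (Suc k) \<noteq> C k"
    proof
      assume "C (Suc k) = C k"
      then have "C k = L" unfolding C_def L_def
        using coset_closure[OF HG x S(1) gen T] by blast
      then show False using False by simp
    qed
    then have "C k \<subset> C (Suc k)" using mono by auto
    then have "card (C k) < card (C (Suc k))" using fin psubset_card_mono by blast
    then show ?thesis using ck by simp
  qed
  then show ?case unfolding C_def L_def .
qed

theorem theorem1p13:
  fixes G :: "('a, 'b) monoid_scheme" and \<mu> :: "nat \<Rightarrow> 'a pmf"
  assumes "fin_gen_group G"
    and "\<And>n. prob_on G (\<mu> n)"
    and "almost_invariant G \<mu>"
  shows "measures_index_uniformly G \<mu>"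
proof -
  from assms(1) obtain S where grp: "group G" and S: "finite S" "S \<subseteq> carrier G" "generate G S = carrier G"
    unfolding fin_gen_group_def by blast
  define T where "T = S \<union> m_inv G ` S"
  have "m_inv G ` S \<subseteq> carrier G"
  proof
    fix z assume "z \<in> m_inv G ` S"
    then obtain s where s: "s \<in> S" "z = m_inv G s" by blast
    have "s \<in> carrier G" using s(1) S(2) by (rule rev_subsetD)
    then show "z \<in> carrier G" unfolding s(2) by (rule group.inv_closed[OF grp])
  qed
  then have Tc: "T \<subseteq> carrier G" using S(2) unfolding T_def by simp
  have fT: "finite T" using S unfolding T_def by auto
  show ?thesis unfolding measures_index_uniformly_def
  proof (intro allI impI)
    fix \<epsilon> :: real assume \<epsilon>: "\<epsilon> > 0"
    obtain r where r: "inverse (real (Suc r)) < \<epsilon>/2" using reals_Archimedean[of "\<epsilon>/2"] \<epsilon> by auto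
    define \<delta> where "\<delta> = \<epsilon>/4"
    have \<delta>: "\<delta> > 0" using \<epsilon> unfolding \<delta>_def by simp
    define W where "W = wball G T r"
    have fW: "finite W" unfolding W_def by (rule wball_finite[OF fT])
    have Wc: "W \<subseteq> carrier G" unfolding W_def by (rule group.wball_carrier[OF grp Tc])
    have ev: "eventually (\<lambda>n. \<forall>w\<in>W. transl_dist G (inv\<^bsub>G\<^esub> w) (\<mu> n) < \<delta>) sequentially"
    proof (rule eventually_ball_finite[OF fW], intro ballI)
      fix w assume "w \<in> W"
      then have "inv\<^bsub>G\<^esub> w \<in> carrier G" by (rule group.inv_closed[OF grp subsetD[OF Wc]])
      then have "(\<lambda>n. transl_dist G (inv\<^bsub>G\<^esub> w) (\<mu> n)) \<longlonglongrightarrow> 0"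
        using assms(3) unfolding almost_invariant_def by blast
      then show "eventually (\<lambda>n. transl_dist G (inv\<^bsub>G\<^esub> w) (\<mu> n) < \<delta>) sequentially"
        using order_tendstoD(2) \<delta> by blast
    qed
    then obtain N where N: "\<And>n w. n \<ge> N \<Longrightarrow> w \<in> W \<Longrightarrow> transl_dist G (inv\<^bsub>G\<^esub> w) (\<mu> n) < \<delta>"
      unfolding eventually_sequentially by blast
    show "\<exists>N. \<forall>n\<ge>N. \<forall>x\<in>carrier G. \<forall>H. subgroup H G \<longrightarrow>
        \<bar>measure_pmf.prob (\<mu> n) (x <#\<^bsub>G\<^esub> H) - inv_index G H\<bar> < \<epsilon>"
    proof (intro exI allI impI ballI)
      fix n x H assume n: "N \<le> n" and x: "x \<in> carrier G" and HG: "subgroup H G"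
      define p where "p A = measure_pmf.prob (\<mu> n) A" for A
      define a where "a = p (x <#\<^bsub>G\<^esub> H)"
      define C where "C = (\<lambda>w. (w \<otimes>\<^bsub>G\<^esub> x) <#\<^bsub>G\<^esub> H) ` W"
      define L where "L = {y <#\<^bsub>G\<^esub> H | y. y \<in> carrier G}"
      have Hc: "H \<subseteq> carrier G" by (rule subgroup.subset[OF HG])
      have xHc: "x <#\<^bsub>G\<^esub> H \<subseteq> carrier G" by (rule group.l_coset_subset_G[OF grp Hc x])
      have close: "\<bar>p c - a\<bar> < \<delta>" if "c \<in> C" for c
      proof -
        obtain w where w: "w \<in> W" "c = (w \<otimes>\<^bsub>G\<^esub> x) <#\<^bsub>G\<^esub> H" using \<open>c \<in> C\<close> unfolding C_def by blast
        have wc: "w \<in> carrier G" using w Wc by blast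
        have iw: "inv\<^bsub>G\<^esub> w \<in> carrier G" by (rule group.inv_closed[OF grp wc])
        have "inv\<^bsub>G\<^esub> (inv\<^bsub>G\<^esub> w) <#\<^bsub>G\<^esub> (x <#\<^bsub>G\<^esub> H) = c"
          using group.inv_inv[OF grp wc] group.lcos_m_assoc[OF grp Hc wc x] w by simp
        then have "\<bar>p c - a\<bar> \<le> transl_dist G (inv\<^bsub>G\<^esub> w) (\<mu> n)"
          using group.transl_bound[OF grp iw xHc, of "\<mu> n"] unfolding p_def a_def by simp
        also have "\<dots> < \<delta>" using N[OF n w(1)] .
        finally show ?thesis .
      qed
      have one_W: "\<one>\<^bsub>G\<^esub> \<in> W" unfolding W_def by (rule group.wball_one[OF grp])
      have xH_C: "x <#\<^bsub>G\<^esub> H \<in> C" unfolding C_def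
        using one_W monoid.l_one[OF group.is_monoid[OF grp] x] by force
      have CL: "C \<subseteq> L" unfolding C_def L_def using Wc x monoid.m_closed[OF group.is_monoid[OF grp]] by blast
      have fC: "finite C" unfolding C_def using fW by simp
      have disj: "c1 \<inter> c2 = {}" if c1L: "c1 \<in> L" and c2L: "c2 \<in> L" and ne: "c1 \<noteq> c2" for c1 c2
      proof (rule ccontr)
        assume "c1 \<inter> c2 \<noteq> {}"
        then obtain z where z: "z \<in> c1" "z \<in> c2" by blast
        obtain y1 where y1: "y1 \<in> carrier G" "c1 = y1 <#\<^bsub>G\<^esub> H" using c1L unfolding L_def by blast
        obtain y2 where y2: "y2 \<in> carrier G" "c2 = y2 <#\<^bsub>G\<^esub> H" using c2L unfolding L_def by blast
        have "c1 = z <#\<^bsub>G\<^esub> H" using group.l_repr_independence[OF grp _ y1(1) HG, of z] z y1 by simp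
        moreover have "c2 = z <#\<^bsub>G\<^esub> H" using group.l_repr_independence[OF grp _ y2(1) HG, of z] z y2 by simp
        ultimately show False using ne by simp
      qed
      have sumC: "(\<Sum>c\<in>C. p c) = p (\<Union>C)"
      proof -
        have "measure_pmf.prob (\<mu> n) (\<Union>i\<in>C. id i) = (\<Sum>i\<in>C. measure_pmf.prob (\<mu> n) (id i))"
          by (rule measure_pmf.finite_measure_finite_Union[OF fC]) (use disj CL in \<open>auto simp: disjoint_family_on_def\<close>)
        then show ?thesis unfolding p_def by simp
      qed
      have pU: "p (\<Union>C) \<le> 1" unfolding p_def by (rule measure_pmf.prob_le_1)
      have sum_le: "(\<Sum>c\<in>C. p c) \<le> 1" using sumC pU by linarith
      have growth: "C = L \<or> Suc r \<le> card C"
        using group.coset_growth[OF grp HG x S(2) S(1) S(3) T_def, of r] unfolding C_def L_def W_def .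
      have bij: "bij_betw (\<lambda>c. (\<lambda>a. m_inv G a) ` c) L (rcosets\<^bsub>G\<^esub> H)"
        unfolding L_def by (rule group.lcosets_bij[OF grp HG])
      have finLR: "finite L \<longleftrightarrow> finite (rcosets\<^bsub>G\<^esub> H)" using bij by (rule bij_betw_finite)
      have cardLR: "card L = card (rcosets\<^bsub>G\<^esub> H)" using bij by (rule bij_betw_same_card)
      have a0: "0 \<le> a" unfolding a_def p_def by simp
      have ii0: "0 \<le> inv_index G H" unfolding inv_index_def by simp
      show "\<bar>measure_pmf.prob (\<mu> n) (x <#\<^bsub>G\<^esub> H) - inv_index G H\<bar> < \<epsilon>"
      proof (cases "C = L")
        case True
        define d where "d = card C"
        have dpos: "d > 0" unfolding d_def using fC xH_C card_gt_0_iff by blast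
        have UL: "\<Union>C = carrier G"
        proof
          show "\<Union>C \<subseteq> carrier G" using True unfolding L_def
            using group.l_coset_subset_G[OF grp Hc] by blast
          show "carrier G \<subseteq> \<Union>C"
          proof
            fix y assume y: "y \<in> carrier G"
            have "y \<otimes>\<^bsub>G\<^esub> \<one>\<^bsub>G\<^esub> \<in> y <#\<^bsub>G\<^esub> H"
              unfolding l_coset_def using subgroup.one_closed[OF HG] by blast
            moreover have "y \<otimes>\<^bsub>G\<^esub> \<one>\<^bsub>G\<^esub> = y" by (rule monoid.r_one[OF group.is_monoid[OF grp] y])
            moreover have "y <#\<^bsub>G\<^esub> H \<in> C" using True y unfolding L_def by blast
            ultimately show "y \<in> \<Union>C" by auto
          qed
        qed
        have "p (\<Union>C) = 1" unfolding UL p_def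
          by (rule prob_carrier) (use assms(2) in \<open>simp add: prob_on_def\<close>)
        then have s1: "(\<Sum>c\<in>C. p c) = 1" using sumC by simp
        have "\<bar>(\<Sum>c\<in>C. p c - a)\<bar> \<le> (\<Sum>c\<in>C. \<bar>p c - a\<bar>)" by (rule sum_abs)
        also have "\<dots> \<le> (\<Sum>c\<in>C. \<delta>)" by (intro sum_mono) (use close in \<open>simp add: less_imp_le\<close>)
        finally have "\<bar>1 - d * a\<bar> \<le> d * \<delta>" using s1 unfolding d_def by (simp add: sum_subtractf)
        then have "\<bar>1/d - a\<bar> \<le> \<delta>" using dpos
          by (simp add: field_simps abs_le_iff)
        moreover have "inv_index G H = 1/d"
          using True fC finLR cardLR unfolding inv_index_def d_def by simp
        ultimately show ?thesis unfolding a_def p_def \<delta>_def using \<epsilon> by (simp add: abs_minus_commute)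
      next
        case False
        then have cC: "Suc r \<le> card C" using growth by simp
        have "(\<Sum>c\<in>C. a - \<delta>) \<le> (\<Sum>c\<in>C. p c)"
          by (intro sum_mono) (use close in \<open>fastforce simp: abs_less_iff\<close>)
        then have "card C * (a - \<delta>) \<le> 1" using sum_le by simp
        then have ad: "a - \<delta> \<le> inverse (real (Suc r))"
        proof (cases "a - \<delta> \<le> 0")
          case False
          have "real (Suc r) * (a - \<delta>) \<le> card C * (a - \<delta>)"
            using cC False by (intro mult_right_mono) auto
          then have "real (Suc r) * (a - \<delta>) \<le> 1" using \<open>card C * (a - \<delta>) \<le> 1\<close> by linarith
          then show ?thesis by (simp add: field_simps)
        qed (simp add: order_trans[OF _ less_imp_le[OF positive_imp_inverse_positive]])
        have ii: "inv_index G H \<le> inverse (real (Suc r))"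
        proof (cases "finite (rcosets\<^bsub>G\<^esub> H)")
          case True
          then have "card C \<le> card (rcosets\<^bsub>G\<^esub> H)" using finLR cardLR CL card_mono by metis
          then have "Suc r \<le> card (rcosets\<^bsub>G\<^esub> H)" using cC by simp
          then show ?thesis using True unfolding inv_index_def
            by (simp add: field_simps)
        qed (simp add: inv_index_def)
        have "\<bar>a - inv_index G H\<bar> < \<epsilon>" using a0 ii0 ad ii r \<delta>_def by (simp add: abs_less_iff)
        then show ?thesis unfolding a_def p_def .
      qed
    qed
  qed
qed

end
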